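(* Let $\Delta$ be the finite-difference Laplacian on $\mathbb{Z}$, $\Delta f(n)=f(n+1)+f(n-1)-2f(n)$. There is $\delta>0$ such that for every $t\ge0$ one can choose complex numbers $(a_j)_{j\in\mathbb{Z}}$ with $|a_j|\le1$ so that, with $\psi_0=\sum_{j}a_j\delta_j$ and $\psi(t,n)=(e^{it\Delta}\psi_0)(n)$, $$|\psi(t,0)|\ge\delta\,t^{1/2}.$$
   Context: $\delta_j$ denotes the Kronecker delta function on $\mathbb{Z}$ supported at $j$; $e^{it\Delta}$ is the (bounded, unitary on $\ell^2$) linear Schrödinger evolution on $\mathbb{Z}$, applied to bounded sequences via its kernel. *)

theory Defs
  imports "HOL-Analysis.Analysis"
begin

definition dlap :: "(int \<Rightarrow> complex) \<Rightarrow> (int \<Rightarrow> complex)" where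
  "dlap f = (\<lambda>n. f (n + 1) + f (n - 1) - 2 * f n)"

text \<open>Since the
  discrete Laplacian is a bounded operator (norm at most 4) on bounded sequences,
  the exponential series converges pointwise; on bounded sequences this coincides
  with the action of the kernel of the unitary group on square-summable sequences.\<close>
definition schr_evol :: "real \<Rightarrow> (int \<Rightarrow> complex) \<Rightarrow> (int \<Rightarrow> complex)" where
  "schr_evol t f = (\<lambda>n. \<Sum>k. (\<i> * complex_of_real t) ^ k / of_nat (fact k) * (((dlap ^^ k) f) n))"

end

theory Submission
  imports Defs
begin

definition d0 :: "int \<Rightarrow> complex" where "d0 n = (if n = 0 then 1 else 0)"
definition cc :: "nat \<Rightarrow> int \<Rightarrow> complex" where "cc k = (dlap ^^ k) d0"

lemma cc_0: "cc 0 n = d0 n" by (simp add: cc_def)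
lemma cc_Suc: "cc (Suc k) n = cc k (n+1) + cc k (n-1) - 2 * cc k n"
  by (simp add: cc_def dlap_def)

lemma cc_supp: "\<bar>n\<bar> > int k \<Longrightarrow> cc k n = 0"
proof (induction k arbitrary: n)
  case 0 then show ?case by (simp add: cc_0 d0_def)
next
  case (Suc k) then show ?case by (simp add: cc_Suc)
qed

lemma cc_cnj: "cnj (cc k n) = cc k n"
  by (induction k arbitrary: n) (simp_all add: cc_0 d0_def cc_Suc)

lemma has_sum_shift_int:
  "((\<lambda>n. f (n + s)) has_sum S) (UNIV::int set) \<longleftrightarrow> (f has_sum S) UNIV"
  by (rule has_sum_reindex_bij_witness[of _ "\<lambda>n. n - s" "\<lambda>n. n + s"]) auto

lemma infsum_shift_int:
  "infsum (\<lambda>n. f (n + s)) (UNIV::int set) = infsum f UNIV"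
  by (rule infsum_reindex_bij_witness[of _ "\<lambda>n. n - s" "\<lambda>n. n + s"]) auto

lemma summable_shift_int:
  "(\<lambda>n. f (n + s)) summable_on (UNIV::int set) \<longleftrightarrow> f summable_on UNIV"
  using has_sum_shift_int unfolding summable_on_def by blast

lemma summable_shift_int':
  "f summable_on (UNIV::int set) \<Longrightarrow> (\<lambda>n. f (n - s)) summable_on UNIV"
  using summable_shift_int[of f "-s"] by simp

lemma infsum_shift_int':
  "infsum (\<lambda>n. f (n - s)) (UNIV::int set) = infsum f UNIV"
  using infsum_shift_int[of f "-s"] by simp

lemma infsum_add3:
  fixes f g h :: "'a \<Rightarrow> 'b::{topological_ab_group_add, t2_space, topological_semigroup_mult, ring}"
  assumes "f summable_on A" "g summable_on A" "h summable_on A"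
  shows "infsum (\<lambda>x. f x + g x + c * h x) A = infsum f A + infsum g A + c * infsum h A"
proof -
  have "infsum (\<lambda>x. f x + g x + c * h x) A = infsum (\<lambda>x. f x + g x) A + infsum (\<lambda>x. c * h x) A"
    by (rule infsum_add) (auto intro: summable_on_add summable_on_cmult_right assms)
  also have "\<dots> = infsum f A + infsum g A + c * infsum h A"
    by (simp add: infsum_add assms infsum_cmult_right)
  finally show ?thesis .
qed

lemma fs_summable:
  assumes "\<And>n::int. \<bar>n\<bar> > N \<Longrightarrow> f n = 0"
  shows "f summable_on UNIV"
proof (rule finite_nonzero_values_imp_summable_on)
  have "{x\<in>UNIV. f x \<noteq> 0} \<subseteq> {-N..N}" using assms by force
  then show "finite {x\<in>UNIV. f x \<noteq> 0}" using finite_subset by blast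
qed

lemma cc_norm_summable: "(\<lambda>n. cmod (cc k n)) summable_on UNIV"
  by (rule fs_summable[of "int k"]) (simp add: cc_supp)

lemma cc_l1: "infsum (\<lambda>n. cmod (cc k n)) UNIV \<le> 4^k"
proof (induction k)
  case 0
  have "infsum (\<lambda>n. cmod (cc 0 n)) UNIV = infsum (\<lambda>n. if n = 0 then 1 else 0) (UNIV::int set)"
    by (rule infsum_cong) (simp add: cc_0 d0_def)
  also have "\<dots> = 1"
    by (rule infsumI, rule has_sum_finite_neutralI[of "{0}"]) auto
  finally show ?case by simp
next
  case (Suc k)
  have s1: "(\<lambda>n. cmod (cc k (n+1))) summable_on UNIV"
    using summable_shift_int[of "\<lambda>n. cmod (cc k n)"] cc_norm_summable by blast
  have s2: "(\<lambda>n. cmod (cc k (n - 1))) summable_on UNIV"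
    using summable_shift_int'[of "\<lambda>n. cmod (cc k n)"] cc_norm_summable by blast
  have s3: "(\<lambda>n. 2 * cmod (cc k n)) summable_on UNIV"
    using cc_norm_summable summable_on_cmult_right by blast
  have "infsum (\<lambda>n. cmod (cc (Suc k) n)) UNIV
     \<le> infsum (\<lambda>n. cmod (cc k (n+1)) + cmod (cc k (n - 1)) + 2 * cmod (cc k n)) UNIV"
  proof (rule infsum_mono)
    show "(\<lambda>n. cmod (cc (Suc k) n)) summable_on UNIV" by (rule cc_norm_summable)
    show "(\<lambda>n. cmod (cc k (n+1)) + cmod (cc k (n - 1)) + 2 * cmod (cc k n)) summable_on UNIV"
      by (intro summable_on_add s1 s2 s3)
    fix n :: int
    have "cmod (cc (Suc k) n) \<le> cmod (cc k (n+1) + cc k (n-1)) + cmod (2 * cc k n)"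
      unfolding cc_Suc by (rule norm_triangle_ineq4)
    also have "\<dots> \<le> cmod (cc k (n+1)) + cmod (cc k (n-1)) + cmod (2 * cc k n)"
      using norm_triangle_ineq by simp
    finally have "cmod (cc (Suc k) n) \<le> cmod (cc k (n+1)) + cmod (cc k (n-1)) + cmod (2 * cc k n)" .
    then show "cmod (cc (Suc k) n) \<le> cmod (cc k (n+1)) + cmod (cc k (n - 1)) + 2 * cmod (cc k n)"
      by (simp add: norm_mult)
  qed
  also have "\<dots> = infsum (\<lambda>n. cmod (cc k (n+1))) UNIV + infsum (\<lambda>n. cmod (cc k (n - 1))) UNIV
       + 2 * infsum (\<lambda>n. cmod (cc k n)) UNIV"
    by (rule infsum_add3[OF s1 s2 cc_norm_summable])
  also have "\<dots> = 4 * infsum (\<lambda>n. cmod (cc k n)) UNIV"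
    using infsum_shift_int[of "\<lambda>n. cmod (cc k n)" 1] infsum_shift_int'[of "\<lambda>n. cmod (cc k n)" 1] by simp
  also have "\<dots> \<le> 4 * 4^k" using Suc by simp
  finally show ?case by simp
qed

lemma cc_bound: "cmod (cc k n) \<le> 4^k"
proof -
  have "sum (\<lambda>n. cmod (cc k n)) {n} \<le> infsum (\<lambda>n. cmod (cc k n)) UNIV"
    by (rule finite_sum_le_infsum) (auto simp: cc_norm_summable)
  then show ?thesis using cc_l1[of k] by simp
qed

lemma cc_conv: "infsum (\<lambda>j. cc k (j+m) * cc l j) UNIV = cc (k+l) m"
proof (induction l arbitrary: k m)
  case 0
  have "infsum (\<lambda>j. cc k (j+m) * cc 0 j) UNIV = cc k m"
    by (rule infsumI, rule has_sum_finite_neutralI[of "{0}"]) (auto simp: cc_0 d0_def)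
  then show ?case by simp
next
  case (Suc l)
  have sm: "(\<lambda>j. cc k (j+m) * cc l (j + s)) summable_on UNIV" for k m s
    by (rule fs_summable[of "int l + \<bar>s\<bar>"]) (simp add: cc_supp)
  have sm2: "(\<lambda>j. cc k (j+m) * cc l j) summable_on UNIV" for k m
    using sm[of k m 0] by simp
  have e1: "infsum (\<lambda>j. cc k (j+m) * cc l (j+1)) UNIV = infsum (\<lambda>j. cc k (j + (m-1)) * cc l j) UNIV"
    using infsum_shift_int[of "\<lambda>j. cc k (j + (m-1)) * cc l j" 1] by (simp add: algebra_simps)
  have e2: "infsum (\<lambda>j. cc k (j+m) * cc l (j - 1)) UNIV = infsum (\<lambda>j. cc k (j + (m+1)) * cc l j) UNIV"
    using infsum_shift_int'[of "\<lambda>j. cc k (j + (m+1)) * cc l j" 1] by (simp add: algebra_simps)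
  have sm3: "(\<lambda>j. cc k (j+m) * cc l (j - 1)) summable_on UNIV" for k m
    using sm[of k m "-1"] by simp
  have "infsum (\<lambda>j. cc k (j+m) * cc (Suc l) j) UNIV
      = infsum (\<lambda>j. cc k (j+m) * cc l (j+1) + cc k (j+m) * cc l (j - 1) + (-2) * (cc k (j+m) * cc l j)) UNIV"
    by (rule infsum_cong) (simp add: cc_Suc algebra_simps)
  also have "\<dots> = infsum (\<lambda>j. cc k (j+m) * cc l (j+1)) UNIV + infsum (\<lambda>j. cc k (j+m) * cc l (j - 1)) UNIV
      + (-2) * infsum (\<lambda>j. cc k (j+m) * cc l j) UNIV"
    by (rule infsum_add3[OF sm sm3 sm2])
  also have "\<dots> = infsum (\<lambda>j. cc k (j + (m-1)) * cc l j) UNIV + infsum (\<lambda>j. cc k (j + (m+1)) * cc l j) UNIV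
      + (-2) * infsum (\<lambda>j. cc k (j+m) * cc l j) UNIV"
    using e1 e2 by simp
  also have "\<dots> = infsum (\<lambda>j. cc k (j + (m-1)) * cc l j + cc k (j + (m+1)) * cc l j + (-2) * (cc k (j+m) * cc l j)) UNIV"
    by (rule infsum_add3[symmetric, OF sm2 sm2 sm2])
  also have "\<dots> = infsum (\<lambda>j. cc (Suc k) (j+m) * cc l j) UNIV"
  proof (rule infsum_cong)
    fix j
    have "j + m + 1 = j + (m+1)" "j + m - 1 = j + (m-1)" by simp_all
    then show "cc k (j + (m-1)) * cc l j + cc k (j + (m+1)) * cc l j + (-2) * (cc k (j+m) * cc l j)
       = cc (Suc k) (j+m) * cc l j"
      unfolding cc_Suc by (simp add: algebra_simps)
  qed
  also have "\<dots> = cc (Suc k + l) m" by (rule Suc)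
  finally show ?case by simp
qed

lemma cc_comm: "of_int j * cc (Suc k) j = of_nat (Suc k) * (cc k (j-1) - cc k (j+1))"
proof (induction k arbitrary: j)
  case 0
  show ?case
  proof (cases "j = 1 \<or> j = -1")
    case True then show ?thesis by (auto simp: cc_Suc cc_0 d0_def)
  next
    case False
    then have "j + 1 \<noteq> 0" "j - 1 \<noteq> 0" by auto
    with False show ?thesis by (auto simp: cc_Suc cc_0 d0_def)
  qed
next
  case (Suc k)
  have A: "of_int (j+1) * cc (Suc k) (j+1) = of_nat (Suc k) * (cc k j - cc k (j+2))"
  proof -
    have e: "j + 1 + 1 = j + 2" "j + 1 - 1 = j" by simp_all
    show ?thesis using Suc[of "j+1"] unfolding e .
  qed
  have B: "of_int (j-1) * cc (Suc k) (j-1) = of_nat (Suc k) * (cc k (j-2) - cc k j)"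
    using Suc[of "j-1"] by (simp add: algebra_simps)
  have C: "of_int j * cc (Suc k) j = of_nat (Suc k) * (cc k (j-1) - cc k (j+1))"
    by (rule Suc)
  have "of_int j * cc (Suc (Suc k)) j
     = of_int (j+1) * cc (Suc k) (j+1) - cc (Suc k) (j+1) + of_int (j-1) * cc (Suc k) (j-1)
       + cc (Suc k) (j-1) - 2 * (of_int j * cc (Suc k) j)"
    unfolding cc_Suc[of "Suc k" j] of_int_add of_int_diff of_int_1 by algebra
  also have "\<dots> = of_nat (Suc k) * (cc k j - cc k (j+2)) - cc (Suc k) (j+1)
       + of_nat (Suc k) * (cc k (j-2) - cc k j) + cc (Suc k) (j-1)
       - 2 * (of_nat (Suc k) * (cc k (j-1) - cc k (j+1)))"
    by (simp only: A B C)
  also have "\<dots> = of_nat (Suc (Suc k)) * (cc (Suc k) (j-1) - cc (Suc k) (j+1))"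
  proof -
    have S1: "cc (Suc k) (j-1) = cc k j + cc k (j-2) - 2 * cc k (j-1)"
      using cc_Suc[of k "j-1"] by (simp add: diff_diff_eq)
    have S2: "cc (Suc k) (j+1) = cc k (j+2) + cc k j - 2 * cc k (j+1)"
      using cc_Suc[of k "j+1"] by (simp add: add.assoc)
    show ?thesis unfolding S1 S2 of_nat_Suc by algebra
  qed
  finally show ?case .
qed



definition aa :: "real \<Rightarrow> nat \<Rightarrow> complex" where
  "aa t k = (\<i> * complex_of_real t) ^ k / of_nat (fact k)"

definition uu :: "real \<Rightarrow> int \<Rightarrow> complex" where
  "uu t j = (\<Sum>k. aa t k * cc k j)"

lemma uu_schr: "uu t = schr_evol t d0"
  by (simp add: uu_def schr_evol_def aa_def cc_def fun_eq_iff)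

lemma norm_aa: "cmod (aa t k) = \<bar>t\<bar>^k / fact k"
  by (simp add: aa_def norm_mult norm_power norm_divide)

lemma summable_g: "summable (\<lambda>k. \<bar>t::real\<bar>^k / fact k * 4^k)"
proof -
  have "summable (\<lambda>k. (4*\<bar>t\<bar>)^k /\<^sub>R fact k)" by (rule summable_exp_generic)
  then show ?thesis by (simp add: power_mult_distrib divide_inverse mult_ac)
qed

lemma summable_aa_cc: "summable (\<lambda>k. cmod (aa t k * cc k j))"
proof (rule summable_comparison_test'[OF summable_g])
  fix k
  have "cmod (aa t k * cc k j) = \<bar>t\<bar>^k / fact k * cmod (cc k j)" by (simp add: norm_mult norm_aa)
  also have "\<dots> \<le> \<bar>t\<bar>^k / fact k * 4^k" by (rule mult_left_mono[OF cc_bound]) simp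
  finally show "norm (cmod (aa t k * cc k j)) \<le> \<bar>t\<bar>^k / fact k * 4^k" by simp
qed

lemma uu_has_sum: "((\<lambda>k. aa t k * cc k j) has_sum uu t j) UNIV"
  unfolding uu_def
  by (rule norm_summable_imp_has_sum[OF summable_aa_cc])
     (rule summable_sums, rule summable_norm_cancel[OF summable_aa_cc])

lemma uu_cnj_has_sum: "((\<lambda>k. cnj (aa t k) * cc k j) has_sum cnj (uu t j)) UNIV"
proof -
  have "((\<lambda>k. cnj (aa t k * cc k j)) has_sum cnj (uu t j)) UNIV"
    by (subst has_sum_cnj_iff) (rule uu_has_sum)
  then show ?thesis by (simp add: cc_cnj)
qed

lemma abs_summable_times:
  fixes f :: "'a \<Rightarrow> complex" and g :: "'b \<Rightarrow> complex"
  assumes "(\<lambda>x. norm (f x)) summable_on A" "(\<lambda>x. norm (g x)) summable_on B"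
  shows "(\<lambda>p. norm ((\<lambda>(x,y). f x * g y) p)) summable_on A \<times> B"
proof -
  have "(\<lambda>p. norm ((\<lambda>(x,y). f x * g y) p)) summable_on Sigma A (\<lambda>_. B)"
  proof (rule Infinite_Sum.abs_summable_on_Sigma_iff[THEN iffD2], intro conjI ballI)
    fix x assume "x \<in> A"
    show "(\<lambda>y. norm (case (x, y) of (x, y) \<Rightarrow> f x * g y)) summable_on B"
      using summable_on_cmult_right[OF assms(2), of "cmod (f x)"] by (simp add: norm_mult)
  next
    have eq: "norm (infsum (\<lambda>y. norm (case (x, y) of (x, y) \<Rightarrow> f x * g y)) B)
        = norm (norm (f x) * infsum (\<lambda>y. norm (g y)) B)" for x
      by (simp add: norm_mult infsum_cmult_right')
    have S: "(\<lambda>x. norm (norm (f x) * infsum (\<lambda>y. norm (g y)) B)) summable_on A"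
      using summable_on_cmult_left[OF assms(1), of "infsum (\<lambda>y. norm (g y)) B"]
      by (simp add: norm_mult infsum_nonneg)
    show "(\<lambda>x. norm (infsum (\<lambda>y. norm (case (x, y) of (x, y) \<Rightarrow> f x * g y)) B)) summable_on A"
      unfolding eq by (rule S)
  qed
  then show ?thesis by simp
qed

lemma infsum_times:
  fixes f :: "'a \<Rightarrow> complex" and g :: "'b \<Rightarrow> complex"
  assumes "(\<lambda>x. norm (f x)) summable_on A" "(\<lambda>x. norm (g x)) summable_on B"
  shows "infsum (\<lambda>(x,y). f x * g y) (A \<times> B) = infsum f A * infsum g B"
proof -
  have s: "(\<lambda>(x,y). f x * g y) summable_on A \<times> B"
    using abs_summable_times[OF assms] abs_summable_summable by blast
  have "infsum (\<lambda>(x,y). f x * g y) (A \<times> B) = infsum (\<lambda>x. infsum (\<lambda>y. f x * g y) B) A"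
    using infsum_Sigma'_banach[of "\<lambda>x y. f x * g y" A "\<lambda>_. B"] s by simp
  also have "\<dots> = infsum (\<lambda>x. f x * infsum g B) A"
    by (simp add: infsum_cmult_right')
  also have "\<dots> = infsum f A * infsum g B"
    by (simp add: infsum_cmult_left')
  finally show ?thesis .
qed

lemma binom_exp: "(\<Sum>k\<le>n. aa t k * cnj (aa t (n - k))) = (if n = 0 then 1 else 0)"
proof -
  define x where "x = \<i> * complex_of_real t"
  have cx: "cnj x = - x" by (simp add: x_def)
  have "(\<Sum>k\<le>n. aa t k * cnj (aa t (n - k))) = (\<Sum>k\<le>n. x^k /\<^sub>R fact k * (-x)^(n-k) /\<^sub>R fact (n-k))"
    by (intro sum.cong refl) (simp add: aa_def x_def[symmetric] cx scaleR_conv_of_real divide_inverse)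
  also have "\<dots> = (x + - x)^n /\<^sub>R fact n"
    by (subst exp_series_add_commuting) (auto simp: algebra_simps)
  also have "\<dots> = (if n = 0 then 1 else 0)" by simp
  finally show ?thesis .
qed



lemma regroup:
  fixes H :: "nat \<times> nat \<Rightarrow> complex"
  assumes "H summable_on UNIV"
  shows "infsum H UNIV = infsum (\<lambda>n. \<Sum>k\<le>n. H (k, n-k)) UNIV"
proof -
  let ?S = "Sigma (UNIV::nat set) (\<lambda>n. {..n})"
  have e: "infsum (\<lambda>(n,k). H (k, n-k)) ?S = infsum H UNIV"
    by (rule infsum_reindex_bij_witness[of _ "\<lambda>(k,l). (k+l, k)" "\<lambda>(n,k). (k, n-k)"]) auto
  have s: "(\<lambda>(n,k). H (k, n-k)) summable_on ?S"
  proof -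
    have "(\<lambda>(n,k). H (k, n-k)) summable_on ?S \<longleftrightarrow> H summable_on UNIV"
      by (rule summable_on_reindex_bij_witness[of _ "\<lambda>(k,l). (k+l, k)" "\<lambda>(n,k). (k, n-k)"]) auto
    then show ?thesis using assms by simp
  qed
  have "infsum (\<lambda>n. infsum (\<lambda>k. H (k, n-k)) {..n}) UNIV = infsum (\<lambda>(n,k). H (k, n-k)) ?S"
    using infsum_Sigma'_banach[of "\<lambda>n k. H (k, n-k)" UNIV "\<lambda>n. {..n}"] s by simp
  then show ?thesis using e by simp
qed

definition GG :: "real \<Rightarrow> nat \<Rightarrow> complex" where "GG t k = complex_of_real (\<bar>t\<bar>^k / fact k * 4^k)"

lemma GG_abs: "(\<lambda>k. norm (GG t k)) summable_on UNIV"
proof -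
  have "(\<lambda>k. \<bar>t\<bar>^k / fact k * 4^k) summable_on UNIV"
    by (rule summable_nonneg_imp_summable_on[OF summable_g]) simp
  moreover have "norm (GG t k) = \<bar>t\<bar>^k / fact k * 4^k" for k
    by (simp only: GG_def norm_of_real) simp
  ultimately show ?thesis by simp
qed

lemma aa_cc_abs: "(\<lambda>k. norm (aa t k * cc k j)) summable_on UNIV"
  using norm_summable_imp_summable_on[OF summable_norm_cancel, of "\<lambda>k. cmod (aa t k * cc k j)"]
    summable_aa_cc[of t j] by simp

lemma aa_cc_abs': "(\<lambda>k. norm (cnj (aa t k) * cc k j)) summable_on UNIV"
  using aa_cc_abs[of t j] by (simp add: norm_mult)

lemma normGG: "norm (GG t k) = \<bar>t\<bar>^k / fact k * 4^k"
  by (simp only: GG_def norm_of_real) simp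

definition TT :: "real \<Rightarrow> int \<Rightarrow> nat \<times> nat \<Rightarrow> int \<Rightarrow> complex" where
  "TT t m x j = aa t (fst x) * cc (fst x) (j+m) * (cnj (aa t (snd x)) * cc (snd x) j)"

lemma TT_abs: "(\<lambda>p. norm ((\<lambda>(x,j). TT t m x j) p)) summable_on (UNIV \<times> UNIV)"
proof -
  have "(\<lambda>p. norm ((\<lambda>(x,j). TT t m x j) p)) summable_on Sigma UNIV (\<lambda>_. UNIV)"
  proof (rule Infinite_Sum.abs_summable_on_Sigma_iff[THEN iffD2], intro conjI ballI)
    fix x :: "nat \<times> nat"
    obtain k l where x: "x = (k,l)" by fastforce
    show "(\<lambda>j. norm ((\<lambda>(x,j). TT t m x j) (x, j))) summable_on UNIV"
      by (rule fs_summable[of "int l"]) (simp add: TT_def x cc_supp)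
  next
    have bnd: "norm (infsum (\<lambda>j. norm ((\<lambda>(x,j). TT t m x j) (x, j))) UNIV)
             \<le> norm ((\<lambda>(k,l). GG t k * GG t l) x)" for x
    proof -
      obtain k l where x: "x = (k,l)" by fastforce
      have s1: "(\<lambda>j. cmod (aa t k) * cmod (cnj (aa t l)) * (cmod (cc k (j+m)) * cmod (cc l j))) summable_on UNIV"
        by (rule fs_summable[of "int l"]) (simp add: cc_supp)
      have s2: "(\<lambda>j. cmod (aa t k) * cmod (cnj (aa t l)) * (4^k * cmod (cc l j))) summable_on UNIV"
        by (rule fs_summable[of "int l"]) (simp add: cc_supp)
      have "infsum (\<lambda>j. norm ((\<lambda>(x,j). TT t m x j) (x, j))) UNIV
          = infsum (\<lambda>j. cmod (aa t k) * cmod (cnj (aa t l)) * (cmod (cc k (j+m)) * cmod (cc l j))) UNIV"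
        by (simp add: TT_def x norm_mult mult_ac)
      also have "\<dots> \<le> infsum (\<lambda>j. cmod (aa t k) * cmod (cnj (aa t l)) * (4^k * cmod (cc l j))) UNIV"
        by (rule infsum_mono[OF s1 s2]) (intro mult_left_mono mult_right_mono cc_bound; simp)
      also have "\<dots> = cmod (aa t k) * cmod (cnj (aa t l)) * 4^k * infsum (\<lambda>j. cmod (cc l j)) UNIV"
        by (simp only: infsum_cmult_right' mult.assoc)
      also have "\<dots> \<le> cmod (aa t k) * cmod (cnj (aa t l)) * 4^k * 4^l"
        by (rule mult_left_mono[OF cc_l1]) simp
      also have "\<dots> = norm ((\<lambda>(k,l). GG t k * GG t l) x)"
        by (simp add: x normGG norm_aa norm_mult mult_ac)
      finally have "infsum (\<lambda>j. norm ((\<lambda>(x,j). TT t m x j) (x, j))) UNIV \<le> norm ((\<lambda>(k,l). GG t k * GG t l) x)" .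
      moreover have "infsum (\<lambda>j. norm ((\<lambda>(x,j). TT t m x j) (x, j))) UNIV \<ge> 0"
        by (rule infsum_nonneg) simp
      ultimately show ?thesis by simp
    qed
    have "(\<lambda>p. norm ((\<lambda>(k,l). GG t k * GG t l) p)) summable_on (UNIV \<times> UNIV)"
      by (rule abs_summable_times[OF GG_abs GG_abs])
    then have "(\<lambda>p. norm ((\<lambda>(k,l). GG t k * GG t l) p)) summable_on UNIV" by simp
    then show "(\<lambda>x. norm (infsum (\<lambda>j. norm ((\<lambda>(x,j). TT t m x j) (x, j))) UNIV)) summable_on UNIV"
      by (rule Infinite_Sum.abs_summable_on_comparison_test) (use bnd in simp)
  qed
  then show ?thesis by simp
qed

lemma orth: "((\<lambda>j. uu t (j+m) * cnj (uu t j)) has_sum d0 m) UNIV"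
proof -
  have S: "(\<lambda>(x,j). TT t m x j) summable_on (UNIV \<times> UNIV)"
    by (rule abs_summable_summable[OF TT_abs])
  have S': "(\<lambda>(j,x). TT t m x j) summable_on (UNIV \<times> UNIV)"
    using summable_on_swap[THEN iffD1, OF S] by (simp add: case_prod_unfold)
  have inner_x: "infsum (\<lambda>x. TT t m x j) UNIV = uu t (j+m) * cnj (uu t j)" for j
  proof -
    have "infsum (\<lambda>x. TT t m x j) UNIV
        = infsum (\<lambda>(k,l). (aa t k * cc k (j+m)) * (cnj (aa t l) * cc l j)) (UNIV \<times> UNIV)"
      by (simp add: TT_def case_prod_unfold)
    also have "\<dots> = infsum (\<lambda>k. aa t k * cc k (j+m)) UNIV * infsum (\<lambda>l. cnj (aa t l) * cc l j) UNIV"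
      by (rule infsum_times[OF aa_cc_abs aa_cc_abs'])
    also have "\<dots> = uu t (j+m) * cnj (uu t j)"
      using uu_has_sum[of t "j+m"] uu_cnj_has_sum[of t j] by (simp add: infsumI)
    finally show ?thesis .
  qed
  have inner_j: "infsum (\<lambda>j. TT t m x j) UNIV = aa t (fst x) * cnj (aa t (snd x)) * cc (fst x + snd x) m" for x
  proof -
    have "infsum (\<lambda>j. TT t m x j) UNIV
        = infsum (\<lambda>j. (aa t (fst x) * cnj (aa t (snd x))) * (cc (fst x) (j+m) * cc (snd x) j)) UNIV"
      by (simp add: TT_def mult_ac)
    also have "\<dots> = aa t (fst x) * cnj (aa t (snd x)) * infsum (\<lambda>j. cc (fst x) (j+m) * cc (snd x) j) UNIV"
      by (rule infsum_cmult_right')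
    finally show ?thesis by (simp add: cc_conv)
  qed
  have sj: "(\<lambda>j. infsum (\<lambda>x. TT t m x j) UNIV) summable_on UNIV"
    using summable_on_Sigma_banach[of "\<lambda>j x. TT t m x j" UNIV "\<lambda>_. UNIV"] S' by simp
  have sx: "(\<lambda>x. infsum (\<lambda>j. TT t m x j) UNIV) summable_on UNIV"
    using summable_on_Sigma_banach[of "\<lambda>x j. TT t m x j" UNIV "\<lambda>_. UNIV"] S by simp
  have swap: "infsum (\<lambda>j. infsum (\<lambda>x. TT t m x j) UNIV) UNIV = infsum (\<lambda>x. infsum (\<lambda>j. TT t m x j) UNIV) UNIV"
    using infsum_swap_banach[of "\<lambda>x j. TT t m x j" UNIV UNIV] S by simp
  have "infsum (\<lambda>x. infsum (\<lambda>j. TT t m x j) UNIV) UNIV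
      = infsum (\<lambda>n. \<Sum>k\<le>n. infsum (\<lambda>j. TT t m (k, n-k) j) UNIV) UNIV"
    by (rule regroup[OF sx])
  also have "\<dots> = infsum (\<lambda>n::nat. if n = 0 then d0 m else 0) UNIV"
  proof -
    have P: "(\<Sum>k\<le>n. infsum (\<lambda>j. TT t m (k, n-k) j) UNIV) = (if n = 0 then d0 m else 0)" for n
    proof -
      have "(\<Sum>k\<le>n. infsum (\<lambda>j. TT t m (k, n-k) j) UNIV) = (\<Sum>k\<le>n. aa t k * cnj (aa t (n-k))) * cc n m"
        by (simp add: inner_j sum_distrib_right)
      also have "\<dots> = (if n = 0 then d0 m else 0)" by (simp add: binom_exp cc_0)
      finally show ?thesis .
    qed
    show ?thesis by (simp only: P)
  qed
  also have "\<dots> = d0 m"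
    by (rule infsumI, rule has_sum_finite_neutralI[of "{0}"]) auto
  finally have val: "infsum (\<lambda>j. infsum (\<lambda>x. TT t m x j) UNIV) UNIV = d0 m" using swap by simp
  have "((\<lambda>j. infsum (\<lambda>x. TT t m x j) UNIV) has_sum d0 m) UNIV"
    using sj val has_sum_iff by blast
  then show ?thesis using inner_x by simp
qed



lemma aa_Suc: "aa t (Suc k) * of_nat (Suc k) = \<i> * of_real t * aa t k"
proof -
  have nz: "(of_nat (Suc k)::complex) \<noteq> 0" by (rule of_nat_neq_0)
  have f: "(of_nat (fact (Suc k)) :: complex) = of_nat (Suc k) * of_nat (fact k)"
    by (simp only: fact_Suc of_nat_mult of_nat_id)
  have "aa t (Suc k) * of_nat (Suc k) = (\<i> * of_real t)^(Suc k) / (of_nat (Suc k) * of_nat (fact k)) * of_nat (Suc k)"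
    by (simp only: aa_def f)
  also have "\<dots> = (\<i> * of_real t)^(Suc k) / of_nat (fact k)"
    using nz by (simp only: divide_simps) (simp add: mult_ac)
  also have "\<dots> = \<i> * of_real t * aa t k" by (simp add: aa_def)
  finally show ?thesis .
qed

lemma uu_sums: "(\<lambda>k. aa t k * cc k j) sums uu t j"
  by (rule has_sum_imp_sums[OF uu_has_sum])

lemma recur: "of_int j * uu t j = \<i> * of_real t * (uu t (j-1) - uu t (j+1))"
proof -
  define f where "f k = aa t k * (of_int j * cc k j)" for k
  have ff: "f = (\<lambda>n. of_int j * (aa t n * cc n j))" by (simp add: f_def fun_eq_iff mult.left_commute)
  have f1: "f sums (of_int j * uu t j)"
    unfolding ff by (rule sums_mult[OF uu_sums])
  have f0: "f 0 = 0" by (simp add: f_def cc_0 d0_def)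
  have fS: "f (Suc k) = \<i> * of_real t * (aa t k * cc k (j-1) - aa t k * cc k (j+1))" for k
  proof -
    have "f (Suc k) = aa t (Suc k) * of_nat (Suc k) * (cc k (j-1) - cc k (j+1))"
      by (simp only: f_def cc_comm mult.assoc)
    also have "\<dots> = \<i> * of_real t * (aa t k * cc k (j-1) - aa t k * cc k (j+1))"
      by (simp only: aa_Suc) (simp add: algebra_simps)
    finally show ?thesis .
  qed
  have "(\<lambda>k. f (Suc k)) sums (\<i> * of_real t * (uu t (j-1) - uu t (j+1)))"
    unfolding fS by (intro sums_mult sums_diff uu_sums)
  then have "f sums (\<i> * of_real t * (uu t (j-1) - uu t (j+1)) + f 0)"
    by (simp only: sums_Suc_iff)
  then have "f sums (\<i> * of_real t * (uu t (j-1) - uu t (j+1)))" using f0 by simp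
  with f1 show ?thesis using sums_unique2 by blast
qed

lemma orth2: "((\<lambda>j. uu t (j+p) * cnj (uu t (j+q))) has_sum (if p = q then 1 else 0)) UNIV"
proof -
  have "((\<lambda>j. uu t (j + (p-q)) * cnj (uu t j)) has_sum d0 (p-q)) UNIV" by (rule orth)
  then have "((\<lambda>n. (\<lambda>j. uu t (j + (p-q)) * cnj (uu t j)) (n + q)) has_sum d0 (p-q)) UNIV"
    by (subst has_sum_shift_int)
  then show ?thesis by (simp add: d0_def algebra_simps)
qed

lemma has_sum_sum_fin:
  fixes f :: "'i \<Rightarrow> 'a \<Rightarrow> complex"
  assumes "finite I" "\<And>i. i \<in> I \<Longrightarrow> (f i has_sum s i) A"
  shows "((\<lambda>x. \<Sum>i\<in>I. f i x) has_sum (\<Sum>i\<in>I. s i)) A"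
  using assms
proof (induction I rule: finite_induct)
  case empty then show ?case by simp
next
  case (insert i I)
  then show ?case by (simp add: has_sum_add)
qed

lemma qf:
  assumes "finite M"
  shows "((\<lambda>j. (cmod (\<Sum>p\<in>M. \<alpha> p * uu t (j+p)))^2) has_sum (\<Sum>p\<in>M. (cmod (\<alpha> p))^2)) UNIV"
proof -
  have e: "(\<Sum>p\<in>M. \<alpha> p * uu t (j+p)) * cnj (\<Sum>q\<in>M. \<alpha> q * uu t (j+q))
        = (\<Sum>p\<in>M. \<Sum>q\<in>M. (\<alpha> p * cnj (\<alpha> q)) * (uu t (j+p) * cnj (uu t (j+q))))" for j
    unfolding cnj_sum sum_product complex_cnj_mult by (intro sum.cong refl) (simp add: mult_ac)
  have "((\<lambda>j. \<Sum>p\<in>M. \<Sum>q\<in>M. (\<alpha> p * cnj (\<alpha> q)) * (uu t (j+p) * cnj (uu t (j+q))))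
         has_sum (\<Sum>p\<in>M. \<Sum>q\<in>M. (\<alpha> p * cnj (\<alpha> q)) * (if p = q then 1 else 0))) UNIV"
    by (intro has_sum_sum_fin assms has_sum_cmult_right orth2)
  then have H: "((\<lambda>j. (\<Sum>p\<in>M. \<alpha> p * uu t (j+p)) * cnj (\<Sum>q\<in>M. \<alpha> q * uu t (j+q)))
         has_sum (\<Sum>p\<in>M. \<alpha> p * cnj (\<alpha> p))) UNIV"
    unfolding e using assms by (simp add: if_distrib cong: if_cong)
  have reZ: "Re (z * cnj z) = (cmod z)^2" for z
    using complex_norm_square[of z] by (metis Re_complex_of_real)
  from H have "((\<lambda>j. Re ((\<Sum>p\<in>M. \<alpha> p * uu t (j+p)) * cnj (\<Sum>q\<in>M. \<alpha> q * uu t (j+q))))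
         has_sum Re (\<Sum>p\<in>M. \<alpha> p * cnj (\<alpha> p))) UNIV"
    by (rule has_sum_Re)
  then show ?thesis unfolding Re_sum reZ .
qed

lemma mom0: "((\<lambda>j. (cmod (uu t j))^2) has_sum 1) UNIV"
  using qf[of "{0}" "\<lambda>_. 1" t] by simp

lemma mom2: "((\<lambda>j. (of_int j)^2 * (cmod (uu t j))^2) has_sum (2 * t^2)) UNIV"
proof -
  let ?\<alpha> = "\<lambda>p::int. if p = -1 then \<i> * of_real t else - \<i> * of_real t"
  have e: "of_int j * uu t j = (\<Sum>p\<in>{-1,1}. ?\<alpha> p * uu t (j+p))" for j
    by (simp add: recur algebra_simps)
  have "((\<lambda>j. (cmod (\<Sum>p\<in>{-1,1}. ?\<alpha> p * uu t (j+p)))^2) has_sum (\<Sum>p\<in>{-1,1}. (cmod (?\<alpha> p))^2)) UNIV"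
    by (rule qf) simp
  then have "((\<lambda>j. (cmod (of_int j * uu t j))^2) has_sum (2 * t^2)) UNIV"
    unfolding e[symmetric] by (simp add: norm_mult)
  then show ?thesis by (simp add: norm_mult power_mult_distrib)
qed

lemma alg5:
  fixes J U Um Umm Up Upp T :: complex
  assumes "J * U = \<i> * T * (Um - Up)" "(J - 1) * Um = \<i> * T * (Umm - U)" "(J + 1) * Up = \<i> * T * (U - Upp)"
  shows "J^2 * U = (-1) * T^2 * Umm + \<i> * T * Um + 2 * T^2 * U + \<i> * T * Up - T^2 * Upp"
proof -
  have ii: "\<i> * \<i> = (-1::complex)" by simp
  show ?thesis using assms ii by algebra
qed

lemma recur2: "(of_int j)^2 * uu t j = (-1) * (of_real t)^2 * uu t (j-2) + \<i> * of_real t * uu t (j-1)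
   + 2 * (of_real t)^2 * uu t j + \<i> * of_real t * uu t (j+1) - (of_real t)^2 * uu t (j+2)"
proof (rule alg5)
  show "of_int j * uu t j = \<i> * of_real t * (uu t (j-1) - uu t (j+1))" by (rule recur)
  have e: "j - 1 - 1 = j - 2" "j - 1 + 1 = j" by simp_all
  show "(of_int j - 1) * uu t (j-1) = \<i> * of_real t * (uu t (j-2) - uu t j)"
    using recur[of "j-1" t] unfolding e by simp
  have e2: "j + 1 + 1 = j + 2" "j + 1 - 1 = j" by simp_all
  show "(of_int j + 1) * uu t (j+1) = \<i> * of_real t * (uu t j - uu t (j+2))"
    using recur[of "j+1" t] unfolding e2 by simp
qed

lemma sum5: "(\<Sum>p\<in>{-2,-1,0,1,2::int}. g p) = g (-2) + g (-1) + g 0 + g 1 + g 2"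
  by (simp add: algebra_simps)

lemma mom4: "((\<lambda>j. (of_int j)^4 * (cmod (uu t j))^2) has_sum (6 * t^4 + 2 * t^2)) UNIV"
proof -
  let ?\<alpha> = "\<lambda>p::int. if p = -2 then (-1) * (of_real t)^2 else if p = -1 then \<i> * of_real t
       else if p = 0 then 2 * (of_real t)^2 else if p = 1 then \<i> * of_real t else (-1) * (of_real t)^2"
  have e: "(of_int j)^2 * uu t j = (\<Sum>p\<in>{-2,-1,0,1,2}. ?\<alpha> p * uu t (j+p))" for j
    unfolding sum5 recur2 by simp
  have "((\<lambda>j. (cmod (\<Sum>p\<in>{-2,-1,0,1,2}. ?\<alpha> p * uu t (j+p)))^2)
      has_sum (\<Sum>p\<in>{-2,-1,0,1,2}. (cmod (?\<alpha> p))^2)) UNIV"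
    by (rule qf) simp
  then have "((\<lambda>j. (cmod ((of_int j)^2 * uu t j))^2) has_sum (6 * t^4 + 2 * t^2)) UNIV"
    unfolding e[symmetric] by (simp add: norm_mult norm_power power_mult_distrib)
  then show ?thesis by (simp add: norm_mult norm_power power_mult_distrib)
qed



lemma dlap_pow_Suc: "(dlap ^^ Suc k) f n = (dlap ^^ k) f (n+1) + (dlap ^^ k) f (n-1) - 2 * (dlap ^^ k) f n"
  by (simp add: dlap_def)

lemma dlap_pow_conv:
  "(dlap ^^ k) (\<lambda>n. \<Sum>j\<in>F. b j * g (n - j)) = (\<lambda>n. \<Sum>j\<in>F. b j * (dlap ^^ k) g (n - j))"
proof (induction k)
  case 0 then show ?case by simp
next
  case (Suc k)
  show ?case
  proof
    fix n :: int
    have e: "n + 1 - j = n - j + 1" "n - 1 - j = n - j - 1" for j by simp_all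
    have D: "dlap f m = f (m+1) + f (m-1) - 2 * f m" for f m by (simp add: dlap_def)
    have "(dlap ^^ Suc k) (\<lambda>n. \<Sum>j\<in>F. b j * g (n - j)) n
        = (\<Sum>j\<in>F. b j * (dlap ^^ k) g (n + 1 - j)) + (\<Sum>j\<in>F. b j * (dlap ^^ k) g (n - 1 - j))
          - 2 * (\<Sum>j\<in>F. b j * (dlap ^^ k) g (n - j))"
      by (simp only: dlap_pow_Suc Suc)
    also have "\<dots> = (\<Sum>j\<in>F. b j * ((dlap ^^ k) g (n - j + 1) + (dlap ^^ k) g (n - j - 1) - 2 * (dlap ^^ k) g (n - j)))"
      unfolding e by (simp add: sum.distrib sum_subtractf sum_distrib_left algebra_simps)
    also have "\<dots> = (\<Sum>j\<in>F. b j * (dlap ^^ Suc k) g (n - j))"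
      by (simp only: dlap_pow_Suc)
    finally show "(dlap ^^ Suc k) (\<lambda>n. \<Sum>j\<in>F. b j * g (n - j)) n = (\<Sum>j\<in>F. b j * (dlap ^^ Suc k) g (n - j))" .
  qed
qed

lemma cnj_sgn_mult: "cnj (sgn z) * z = complex_of_real (cmod z)"
proof (cases "z = 0")
  case True then show ?thesis by simp
next
  case False
  have "cnj (sgn z) * z = cnj z * z / complex_of_real (cmod z)"
    by (simp add: sgn_div_norm divide_inverse mult_ac scaleR_conv_of_real)
  also have "\<dots> = (complex_of_real (cmod z))^2 / complex_of_real (cmod z)"
    using complex_norm_square[of z] by (simp add: mult.commute)
  also have "\<dots> = complex_of_real (cmod z)" using False by (simp add: power2_eq_square)
  finally show ?thesis .
qed

lemma assemble:
  fixes N :: int and t :: real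
  defines "a \<equiv> (\<lambda>j. if j \<in> {-N..N} then cnj (sgn (uu t (-j))) else 0)"
  shows "(\<forall>j. norm (a j) \<le> 1) \<and> norm (schr_evol t a 0) = (\<Sum>j\<in>{-N..N}. cmod (uu t j))"
proof
  show "\<forall>j. norm (a j) \<le> 1" by (simp add: a_def norm_sgn)
  let ?F = "{-N..N}"
  have aeq: "a = (\<lambda>n. \<Sum>j\<in>?F. a j * d0 (n - j))"
  proof
    fix n
    have "(\<Sum>j\<in>?F. a j * d0 (n - j)) = (\<Sum>j\<in>?F. if j = n then a j else 0)"
      by (intro sum.cong refl) (simp add: d0_def)
    also have "\<dots> = a n" by (simp add: a_def)
    finally show "a n = (\<Sum>j\<in>?F. a j * d0 (n - j))" by simp
  qed
  have k: "(dlap ^^ k) a 0 = (\<Sum>j\<in>?F. a j * cc k (- j))" for k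
    by (subst aeq, subst dlap_pow_conv) (simp add: cc_def)
  have "schr_evol t a 0 = (\<Sum>k. \<Sum>j\<in>?F. a j * (aa t k * cc k (- j)))"
    by (simp add: schr_evol_def k aa_def sum_distrib_left sum_divide_distrib mult_ac)
  also have "\<dots> = (\<Sum>j\<in>?F. \<Sum>k. a j * (aa t k * cc k (- j)))"
    by (rule suminf_sum) (intro summable_mult sums_summable[OF uu_sums])
  also have "\<dots> = (\<Sum>j\<in>?F. a j * uu t (- j))"
    by (intro sum.cong refl) (simp add: suminf_mult[OF sums_summable[OF uu_sums]] uu_def)
  also have "\<dots> = (\<Sum>j\<in>?F. complex_of_real (cmod (uu t (- j))))"
    by (intro sum.cong refl) (simp add: a_def cnj_sgn_mult)
  also have "\<dots> = complex_of_real (\<Sum>j\<in>?F. cmod (uu t (- j)))" by simp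
  also have "(\<Sum>j\<in>?F. cmod (uu t (- j))) = (\<Sum>j\<in>?F. cmod (uu t j))"
    by (rule sum.reindex_bij_witness[of _ uminus uminus]) auto
  finally have "schr_evol t a 0 = complex_of_real (\<Sum>j\<in>?F. cmod (uu t j))" .
  then have "norm (schr_evol t a 0) = \<bar>\<Sum>j\<in>?F. cmod (uu t j)\<bar>"
    by (simp only: norm_of_real)
  then show "norm (schr_evol t a 0) = (\<Sum>j\<in>?F. cmod (uu t j))"
    by (simp add: sum_nonneg)
qed

lemma fin_le1: "finite F \<Longrightarrow> (\<Sum>j\<in>F. (cmod (uu t j))^2) \<le> 1"
  by (rule finite_sum_le_has_sum[OF mom0]) auto

lemma mom0_shift: "((\<lambda>j. (cmod (uu t (j+1)))^2) has_sum 1) UNIV"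
  using mom0[of t] by (subst has_sum_shift_int)

lemma fin_le1': "finite F \<Longrightarrow> (\<Sum>j\<in>F. (cmod (uu t (j+1)))^2) \<le> 1"
  by (rule finite_sum_le_has_sum[OF mom0_shift]) auto

lemma U_le1: "cmod (uu t j) \<le> 1"
proof -
  have "(cmod (uu t j))^2 \<le> 1" using fin_le1[of "{j}" t] by simp
  then show ?thesis by (simp add: power_le_one_iff abs_le_square_iff)
qed

lemma has_sum_indicator_fin:
  assumes "finite F"
  shows "((\<lambda>j. if j \<in> F then f j else (0::real)) has_sum (\<Sum>j\<in>F. f j)) UNIV"
  by (rule has_sum_finite_neutralI[of F]) (use assms in auto)

lemma small_case:
  assumes "0 \<le> t" "t < 2"
  shows "(\<Sum>j\<in>{-4..4::int}. cmod (uu t j)) \<ge> 1/2"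
proof -
  let ?F = "{-4..4::int}"
  let ?S = "\<Sum>j\<in>?F. (cmod (uu t j))^2"
  have h1: "((\<lambda>j. (if j \<in> ?F then (cmod (uu t j))^2 else 0) + (1/25) * ((of_int j)^2 * (cmod (uu t j))^2))
       has_sum (?S + (1/25) * (2 * t^2))) UNIV"
    by (intro has_sum_add has_sum_indicator_fin has_sum_cmult_right mom2) simp
  have "1 \<le> ?S + (1/25) * (2 * t^2)"
  proof (rule has_sum_mono[OF mom0 h1])
    fix j :: int
    show "(cmod (uu t j))^2 \<le> (if j \<in> ?F then (cmod (uu t j))^2 else 0) + (1/25) * ((of_int j)^2 * (cmod (uu t j))^2)"
    proof (cases "j \<in> ?F")
      case True then show ?thesis by (simp add: zero_le_mult_iff)
    next
      case False
      then have "\<bar>j\<bar> \<ge> 5" by auto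
      then have "(5::real) \<le> of_int \<bar>j\<bar>" by simp
      then have "(5::real)^2 \<le> (of_int \<bar>j\<bar>)^2" by (rule power_mono) simp
      then have "(of_int j::real)^2 \<ge> 25" by (simp add: of_int_abs)
      then have "(cmod (uu t j))^2 \<le> (1/25) * ((of_int j)^2 * (cmod (uu t j))^2)"
        using mult_right_mono[of 25 "(of_int j::real)^2" "(cmod (uu t j))^2"] by (simp add: mult.commute)
      with False show ?thesis by simp
    qed
  qed
  moreover have "t^2 \<le> 2^2" by (rule power_mono) (use assms in auto)
  ultimately have S: "?S \<ge> 1/2" by simp
  have "?S \<le> (\<Sum>j\<in>?F. cmod (uu t j))"
  proof (rule sum_mono)
    fix j
    have "cmod (uu t j) * cmod (uu t j) \<le> 1 * cmod (uu t j)"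
      by (rule mult_right_mono[OF U_le1]) simp
    then show "(cmod (uu t j))^2 \<le> cmod (uu t j)" by (simp add: power2_eq_square)
  qed
  with S show ?thesis by simp
qed

lemma ww_bound1: "(w::real) - w^2 \<le> 1/4"
proof -
  have "0 \<le> (w - 1/2)^2" by simp
  then show ?thesis by (simp add: power2_eq_square algebra_simps)
qed

lemma ww_bound2: "(w::real) \<ge> 31/32 \<Longrightarrow> w - w^2 \<le> 1/32"
proof -
  assume w: "w \<ge> 31/32"
  have "0 \<le> (w - 31/32) * (w - 1/32)" using w by (intro mult_nonneg_nonneg) auto
  moreover have "(w - 31/32) * (w - 1/32) = w^2 - w + 31/1024" by (simp add: power2_eq_square field_simps)
  ultimately show ?thesis by linarith
qed

definition LL :: "real \<Rightarrow> int" where "LL t = \<lfloor>63 * t / 32\<rfloor>"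

lemma LL_le: "real_of_int (LL t) \<le> 63 * t / 32" unfolding LL_def by linarith
lemma LL_gt: "real_of_int (LL t) + 1 > 63 * t / 32" unfolding LL_def by linarith

lemma mass:
  assumes t: "t \<ge> 2"
  shows "(\<Sum>j\<in>{-LL t..LL t}. (cmod (uu t j))^2) \<ge> 1/4"
proof -
  let ?R = "{-LL t..LL t}"
  let ?S = "\<Sum>j\<in>?R. (cmod (uu t j))^2"
  have tp: "t > 0" using t by simp
  have h1: "((\<lambda>j. (1/(4*t^2)) * ((of_int j)^2 * (cmod (uu t j))^2) + (- (1/(16*t^4))) * ((of_int j)^4 * (cmod (uu t j))^2))
      has_sum ((1/(4*t^2)) * (2 * t^2) + (- (1/(16*t^4))) * (6 * t^4 + 2 * t^2))) UNIV"
    by (intro has_sum_add has_sum_cmult_right mom2 mom4)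
  have h2: "((\<lambda>j. (1/32) * (cmod (uu t j))^2 + (if j \<in> ?R then (7/32) * (cmod (uu t j))^2 else 0))
      has_sum ((1/32) * 1 + (\<Sum>j\<in>?R. (7/32) * (cmod (uu t j))^2))) UNIV"
    by (intro has_sum_add has_sum_cmult_right mom0 has_sum_indicator_fin) simp
  have le: "(1/(4*t^2)) * (2 * t^2) + (- (1/(16*t^4))) * (6 * t^4 + 2 * t^2)
      \<le> (1/32) * 1 + (\<Sum>j\<in>?R. (7/32) * (cmod (uu t j))^2)"
  proof (rule has_sum_mono[OF h1 h2])
    fix j :: int
    define w where "w = (of_int j)^2 / (4 * t^2)"
    have w0: "w \<ge> 0" unfolding w_def by simp
    have lhs: "(1/(4*t^2)) * ((of_int j)^2 * (cmod (uu t j))^2) + (- (1/(16*t^4))) * ((of_int j)^4 * (cmod (uu t j))^2)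
        = (cmod (uu t j))^2 * (w - w^2)"
      unfolding w_def using tp by (simp add: field_simps power2_eq_square eval_nat_numeral)
    show "(1/(4*t^2)) * ((of_int j)^2 * (cmod (uu t j))^2) + (- (1/(16*t^4))) * ((of_int j)^4 * (cmod (uu t j))^2)
        \<le> (1/32) * (cmod (uu t j))^2 + (if j \<in> ?R then (7/32) * (cmod (uu t j))^2 else 0)"
    proof (cases "j \<in> ?R")
      case True
      have "(cmod (uu t j))^2 * (w - w^2) \<le> (cmod (uu t j))^2 * (1/4)"
        by (rule mult_left_mono[OF ww_bound1]) simp
      moreover have "(if j \<in> ?R then (7/32) * (cmod (uu t j))^2 else 0) = (7/32) * (cmod (uu t j))^2"
        by (rule if_P[OF True])
      ultimately show ?thesis unfolding lhs by linarith
    next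
      case False
      then have "\<bar>j\<bar> \<ge> LL t + 1" by auto
      then have "real_of_int \<bar>j\<bar> \<ge> real_of_int (LL t) + 1" by linarith
      then have jb: "\<bar>real_of_int j\<bar> \<ge> 63 * t / 32" using LL_gt[of t] by simp
      have "(63 * t / 32)^2 \<le> \<bar>real_of_int j\<bar>^2"
        by (rule power_mono[OF jb]) (use tp in simp)
      then have "(63 * t / 32)^2 \<le> (real_of_int j)^2" by simp
      then have "(63 * t / 32)^2 / (4 * t^2) \<le> w" unfolding w_def
        by (rule divide_right_mono) simp
      moreover have "(63 * t / 32)^2 / (4 * t^2) = 3969 / 4096" using tp by (simp add: field_simps power2_eq_square)
      ultimately have "w \<ge> 31/32" by simp
      then have "(cmod (uu t j))^2 * (w - w^2) \<le> (cmod (uu t j))^2 * (1/32)"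
        by (intro mult_left_mono ww_bound2) simp_all
      moreover have "(if j \<in> ?R then (7/32) * (cmod (uu t j))^2 else 0) = 0"
        by (rule if_not_P[OF False])
      ultimately show ?thesis unfolding lhs by linarith
    qed
  qed
  have "(1/(4*t^2)) * (2 * t^2) + (- (1/(16*t^4))) * (6 * t^4 + 2 * t^2) = 1/8 - 1/(8*t^2)"
    using tp by (simp add: field_simps power2_eq_square eval_nat_numeral)
  moreover have "(\<Sum>j\<in>?R. (7/32) * (cmod (uu t j))^2) = (7/32) * ?S" by (simp add: sum_distrib_left)
  moreover have "1/(8*t^2) \<le> 1/32"
  proof -
    have "t^2 \<ge> 2^2" by (rule power_mono) (use t in auto)
    then have "1/(8*t^2) \<le> 1/(8*4)"
      by (intro divide_left_mono) (auto intro: mult_pos_pos)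
    then show ?thesis by simp
  qed
  ultimately show ?thesis using le by simp
qed

definition PP :: "real \<Rightarrow> int \<Rightarrow> real" where
  "PP t j = (cmod (uu t j))^2 + (cmod (uu t (j+1)))^2"
definition QQ :: "real \<Rightarrow> int \<Rightarrow> real" where
  "QQ t j = PP t j + (of_int j / t) * Im (uu t j * cnj (uu t (j+1)))"

lemma PP_nonneg: "PP t j \<ge> 0" by (simp add: PP_def)

lemma step_alg:
  fixes X Y Z T A J :: complex
  assumes "T * A = J + 1" "(J + 1) * Z = \<i> * T * (Y - X)" "T \<noteq> 0"
  shows "X = Y + \<i> * A * Z"
proof -
  have ii: "\<i> * \<i> = (-1::complex)" by simp
  have "\<i> * T * (X - (Y + \<i> * A * Z)) = 0" using assms(1,2) ii by algebra
  then show ?thesis using assms(3) by simp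
qed

lemma uu_step:
  assumes "t \<noteq> 0"
  shows "uu t (j+2) = uu t j + \<i> * complex_of_real ((of_int j + 1)/t) * uu t (j+1)"
proof (rule step_alg)
  show "complex_of_real t * complex_of_real ((of_int j + 1)/t) = of_int j + 1"
    using assms by (simp flip: of_real_mult)
  have e: "j + 1 - 1 = j" "j + 1 + 1 = j + 2" by simp_all
  show "(of_int j + 1) * uu t (j+1) = \<i> * complex_of_real t * (uu t j - uu t (j+2))"
    using recur[of "j+1" t] unfolding e by simp
  show "complex_of_real t \<noteq> 0" using assms by simp
qed

lemma en_alg:
  assumes "w = x + \<i> * complex_of_real l * y"
  shows "(cmod y)^2 + (cmod w)^2 + l * Im (y * cnj w) = (cmod x)^2 + (cmod y)^2 + l * Im (x * cnj y)"
  unfolding assms cmod_power2 by (simp add: algebra_simps power2_eq_square)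

lemma QQ_succ:
  assumes "t \<noteq> 0"
  shows "QQ t (j+1) = PP t j + ((of_int j + 1)/t) * Im (uu t j * cnj (uu t (j+1)))"
proof -
  have e: "j + 1 + 1 = j + 2" by simp
  have "QQ t (j+1) = (cmod (uu t (j+1)))^2 + (cmod (uu t (j+2)))^2
      + ((of_int j + 1)/t) * Im (uu t (j+1) * cnj (uu t (j+2)))"
    unfolding QQ_def PP_def e by simp
  also have "\<dots> = (cmod (uu t j))^2 + (cmod (uu t (j+1)))^2 + ((of_int j + 1)/t) * Im (uu t j * cnj (uu t (j+1)))"
    by (rule en_alg[OF uu_step[OF assms]])
  finally show ?thesis unfolding PP_def .
qed

lemma Im_bound: "\<bar>Im (x * cnj y)\<bar> \<le> ((cmod x)^2 + (cmod y)^2) / 2"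
proof -
  have "\<bar>Im (x * cnj y)\<bar> \<le> cmod (x * cnj y)" by (rule abs_Im_le_cmod)
  also have "\<dots> = cmod x * cmod y" by (simp add: norm_mult)
  also have "\<dots> \<le> ((cmod x)^2 + (cmod y)^2) / 2"
  proof -
    have "0 \<le> (cmod x - cmod y)^2" by simp
    then show ?thesis by (simp add: power2_eq_square algebra_simps)
  qed
  finally show ?thesis .
qed

lemma Im_PP: "\<bar>Im (uu t j * cnj (uu t (j+1)))\<bar> \<le> PP t j / 2"
  unfolding PP_def by (rule Im_bound)

lemma coef_bound:
  assumes "t \<ge> 2" "\<bar>x\<bar> \<le> 63 * t / 32"
  shows "\<bar>(x / t) * Im (uu t j * cnj (uu t (j+1)))\<bar> \<le> (63/32) * (PP t j / 2)"
proof -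
  have tp: "t > 0" using assms by simp
  have "\<bar>x / t\<bar> \<le> 63/32" using assms tp by (simp add: abs_divide divide_le_eq)
  then have "\<bar>x / t\<bar> * \<bar>Im (uu t j * cnj (uu t (j+1)))\<bar> \<le> (63/32) * (PP t j / 2)"
    by (intro mult_mono Im_PP) simp_all
  then show ?thesis by (simp add: abs_mult)
qed

lemma QQ_low:
  assumes "t \<ge> 2" "\<bar>of_int j\<bar> \<le> 63 * t / 32"
  shows "QQ t j \<ge> PP t j / 64"
  using coef_bound[OF assms, of j] unfolding QQ_def abs_le_iff by linarith

lemma QQ_up:
  assumes "t \<ge> 2" "\<bar>of_int j\<bar> \<le> 63 * t / 32"
  shows "QQ t j \<le> 2 * PP t j"
  using coef_bound[OF assms, of j] PP_nonneg[of t j] unfolding QQ_def abs_le_iff by linarith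

lemma QQ_low':
  assumes "t \<ge> 2" "\<bar>of_int j + 1\<bar> \<le> 63 * t / 32"
  shows "QQ t (j+1) \<ge> PP t j / 64"
proof -
  have "t \<noteq> 0" using assms by simp
  then show ?thesis using coef_bound[OF assms, of j] unfolding QQ_succ[OF \<open>t \<noteq> 0\<close>] abs_le_iff by linarith
qed

lemma QQ_diff:
  assumes "t > 0"
  shows "\<bar>QQ t (j+1) - QQ t j\<bar> \<le> PP t j / (2 * t)"
proof -
  define I where "I = Im (uu t j * cnj (uu t (j+1)))"
  have q1: "QQ t (j+1) = PP t j + ((of_int j + 1)/t) * I" using QQ_succ[of t j] assms by (simp add: I_def)
  have q0: "QQ t j = PP t j + (of_int j / t) * I" by (simp add: QQ_def I_def)
  have "QQ t (j+1) - QQ t j = Im (uu t j * cnj (uu t (j+1))) / t"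
    unfolding q1 q0 add_divide_distrib I_def[symmetric] by (simp add: algebra_simps)
  then have "\<bar>QQ t (j+1) - QQ t j\<bar> = \<bar>Im (uu t j * cnj (uu t (j+1)))\<bar> / t"
    using assms by (simp add: abs_divide)
  also have "\<dots> \<le> (PP t j / 2) / t" by (rule divide_right_mono[OF Im_PP]) (use assms in simp)
  finally show ?thesis by simp
qed

lemma QQ_step:
  assumes "t \<ge> 2" "\<bar>of_int j\<bar> \<le> 63 * t / 32" "\<bar>of_int j + 1\<bar> \<le> 63 * t / 32"
  shows "QQ t (j+1) \<le> (1 + 32/t) * QQ t j \<and> QQ t j \<le> (1 + 32/t) * QQ t (j+1)"
proof -
  have tp: "t > 0" using assms by simp
  have d: "\<bar>QQ t (j+1) - QQ t j\<bar> \<le> PP t j / (2 * t)" by (rule QQ_diff[OF tp])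
  have l1: "PP t j \<le> 64 * QQ t j" using QQ_low[OF assms(1,2)] by simp
  have l2: "PP t j \<le> 64 * QQ t (j+1)" using QQ_low'[OF assms(1,3)] by simp
  have "PP t j / (2 * t) \<le> (64 * QQ t j) / (2 * t)" by (rule divide_right_mono[OF l1]) (use tp in simp)
  moreover have "(64 * QQ t j) / (2 * t) = (32/t) * QQ t j" using tp by (simp add: field_simps)
  moreover have "PP t j / (2 * t) \<le> (64 * QQ t (j+1)) / (2 * t)" by (rule divide_right_mono[OF l2]) (use tp in simp)
  moreover have "(64 * QQ t (j+1)) / (2 * t) = (32/t) * QQ t (j+1)" using tp by (simp add: field_simps)
  ultimately show ?thesis using d by (simp add: algebra_simps abs_le_iff) 
qed

lemma chain:
  fixes q :: "int \<Rightarrow> real"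
  assumes step: "\<And>j. a \<le> j \<Longrightarrow> j + 1 \<le> b \<Longrightarrow> q (j+1) \<le> c * q j \<and> q j \<le> c * q (j+1)"
    and c: "c \<ge> 0"
  shows "a \<le> j \<Longrightarrow> j + int n \<le> b \<Longrightarrow> q (j + int n) \<le> c^n * q j \<and> q j \<le> c^n * q (j + int n)"
proof (induction n)
  case 0 then show ?case by simp
next
  case (Suc n)
  then have IH: "q (j + int n) \<le> c^n * q j \<and> q j \<le> c^n * q (j + int n)" by simp
  have st: "q (j + int n + 1) \<le> c * q (j + int n) \<and> q (j + int n) \<le> c * q (j + int n + 1)"
    using step[of "j + int n"] Suc by simp
  have e: "j + int (Suc n) = j + int n + 1" by simp
  have cn: "c^n \<ge> 0" using c by simp
  have "q (j + int n + 1) \<le> c * (c^n * q j)"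
    using st IH mult_left_mono[of _ _ c] c by (meson order_trans)
  moreover have "q j \<le> c^n * (c * q (j + int n + 1))"
    using st IH mult_left_mono[of _ _ "c^n"] cn by (meson order_trans)
  ultimately show ?case unfolding e by (simp add: mult_ac)
qed

lemma large_case:
  assumes t: "t \<ge> 2"
  shows "(\<Sum>j\<in>{-LL t..LL t}. cmod (uu t j)) \<ge> sqrt t / (64 * exp 63)"
proof -
  define L where "L = LL t"
  let ?R = "{-L..L}"
  have tp: "t > 0" using t by simp
  have Lle: "real_of_int L \<le> 63 * t / 32" using LL_le[of t] by (simp add: L_def)
  have Lgt: "real_of_int L + 1 > 63 * t / 32" using LL_gt[of t] by (simp add: L_def)
  have L0: "L \<ge> 0" using Lgt t by linarith
  have inR: "\<bar>real_of_int j\<bar> \<le> 63 * t / 32" if "j \<in> ?R" for j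
  proof -
    have "\<bar>j\<bar> \<le> L" using that by auto
    then have "real_of_int \<bar>j\<bar> \<le> real_of_int L" by linarith
    then show ?thesis using Lle by simp
  qed
  define c where "c = 1 + 32/t"
  have c1: "c \<ge> 1" using tp by (simp add: c_def)
  have Qnn: "QQ t j \<ge> 0" if "j \<in> ?R" for j
    using QQ_low[OF t inR[OF that]] PP_nonneg[of t j] by linarith
  have chainR: "QQ t (j + int n) \<le> c^n * QQ t j \<and> QQ t j \<le> c^n * QQ t (j + int n)"
    if "-L \<le> j" "j + int n \<le> L" for j n
  proof (rule chain[of "-L" L "QQ t" c, OF _ _ that])
    fix i assume i: "-L \<le> i" "i + 1 \<le> L"
    have a1: "\<bar>real_of_int i\<bar> \<le> 63 * t / 32" using inR[of i] i by simp
    have a2: "\<bar>real_of_int i + 1\<bar> \<le> 63 * t / 32" using inR[of "i+1"] i by simp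
    show "QQ t (i+1) \<le> c * QQ t i \<and> QQ t i \<le> c * QQ t (i+1)"
      using QQ_step[OF t a1 a2] by (simp add: c_def)
  next
    show "c \<ge> 0" using c1 by simp
  qed
  define C where "C = exp (126::real)"
  have cpow: "c ^ nat (2*L) \<le> C"
  proof -
    have c_le: "c \<le> exp (32/t)" unfolding c_def by (rule exp_ge_add_one_self)
    have c0: "0 \<le> c" using c1 by linarith
    have p1: "c ^ nat (2*L) \<le> exp (32/t) ^ nat (2*L)" by (rule power_mono[OF c_le c0])
    have p2: "exp (32/t) ^ nat (2*L) = exp (real (nat (2*L)) * (32/t))" by (rule exp_of_nat_mult[symmetric])
    have n2: "real (nat (2*L)) = 2 * real_of_int L" using L0 by simp
    have e: "real (nat (2*L)) * (32/t) = (64 * real_of_int L) / t" unfolding n2 by simp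
    have "64 * real_of_int L \<le> 126 * t" using Lle by linarith
    then have "(64 * real_of_int L) / t \<le> 126" by (subst pos_divide_le_eq[OF tp]) linarith
    then have p3: "exp (real (nat (2*L)) * (32/t)) \<le> exp 126" unfolding e by (subst exp_le_cancel_iff)
    have p3': "exp (32/t) ^ nat (2*L) \<le> exp 126" using p3 unfolding p2 .
    show ?thesis unfolding C_def by (rule order_trans[OF p1 p3'])
  qed
  have Qcomp: "QQ t k \<le> C * QQ t j" if "j \<in> ?R" "k \<in> ?R" for j k
  proof -
    have cn: "c ^ nat \<bar>k - j\<bar> \<le> C"
    proof -
      have "c ^ nat \<bar>k - j\<bar> \<le> c ^ nat (2*L)"
        by (rule power_increasing) (use that c1 in auto)
      then show ?thesis using cpow by simp
    qed
    have "QQ t k \<le> c ^ nat \<bar>k - j\<bar> * QQ t j"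
    proof (cases "j \<le> k")
      case True
      have h: "-L \<le> j" "j + int (nat (k-j)) \<le> L" using that True by auto
      have e: "j + int (nat (k-j)) = k" using True by simp
      from chainR[OF h] have "QQ t (j + int (nat (k-j))) \<le> c ^ nat (k-j) * QQ t j" by blast
      then have "QQ t k \<le> c ^ nat (k-j) * QQ t j" unfolding e .
      moreover have "nat \<bar>k - j\<bar> = nat (k - j)" using True by simp
      ultimately show ?thesis by simp
    next
      case False
      have h: "-L \<le> k" "k + int (nat (j-k)) \<le> L" using that False by auto
      have e: "k + int (nat (j-k)) = j" using False by simp
      from chainR[OF h] have "QQ t k \<le> c ^ nat (j-k) * QQ t (k + int (nat (j-k)))" by blast
      then have "QQ t k \<le> c ^ nat (j-k) * QQ t j" unfolding e .
      moreover have "nat \<bar>k - j\<bar> = nat (j - k)" using False by simp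
      ultimately show ?thesis by simp
    qed
    also have "\<dots> \<le> C * QQ t j" by (rule mult_right_mono[OF cn Qnn[OF that(1)]])
    finally show ?thesis .
  qed
  have cardR: "real (card ?R) = 2 * real_of_int L + 1" using L0 by simp
  have sumPP: "(\<Sum>j\<in>?R. PP t j) \<le> 2"
  proof -
    have "(\<Sum>j\<in>?R. PP t j) = (\<Sum>j\<in>?R. (cmod (uu t j))^2) + (\<Sum>j\<in>?R. (cmod (uu t (j+1)))^2)"
      by (simp add: PP_def sum.distrib)
    also have "\<dots> \<le> 1 + 1" by (intro add_mono fin_le1 fin_le1') simp_all
    finally show ?thesis by simp
  qed
  have Qk: "QQ t k \<le> 4 * C / (2 * real_of_int L + 1)" if "k \<in> ?R" for k
  proof -
    have "real (card ?R) * QQ t k = (\<Sum>j\<in>?R. QQ t k)" by simp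
    also have "\<dots> \<le> (\<Sum>j\<in>?R. C * (2 * PP t j))"
    proof (rule sum_mono)
      fix j assume j: "j \<in> ?R"
      have "QQ t k \<le> C * QQ t j" by (rule Qcomp[OF j that])
      also have "\<dots> \<le> C * (2 * PP t j)" by (rule mult_left_mono[OF QQ_up[OF t inR[OF j]]]) (simp add: C_def)
      finally show "QQ t k \<le> C * (2 * PP t j)" .
    qed
    also have "\<dots> = 2 * C * (\<Sum>j\<in>?R. PP t j)" by (simp add: sum_distrib_left mult_ac)
    also have "\<dots> \<le> 2 * C * 2" by (rule mult_left_mono[OF sumPP]) (simp add: C_def)
    finally have "(2 * real_of_int L + 1) * QQ t k \<le> 4 * C" using cardR by simp
    moreover have "2 * real_of_int L + 1 > 0" using L0 by simp
    ultimately show ?thesis by (simp add: field_simps)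
  qed
  have tle: "t \<le> 2 * real_of_int L + 1" using Lgt t by linarith
  define s where "s = 16 * exp 63 / sqrt t"
  have s0: "s > 0" using tp by (simp add: s_def)
  have ee: "(exp (63::real))^2 = exp 126" by (simp add: power2_eq_square flip: exp_add)
  have st2: "(sqrt t)^2 = t" using tp by simp
  have s2: "s^2 = 256 * C / t"
    unfolding s_def power_divide power_mult_distrib ee st2 C_def by simp
  have Uk: "cmod (uu t k) \<le> s" if "k \<in> ?R" for k
  proof -
    have "(cmod (uu t k))^2 \<le> PP t k" by (simp add: PP_def)
    also have "\<dots> \<le> 64 * QQ t k" using QQ_low[OF t inR[OF that]] by simp
    also have "\<dots> \<le> 64 * (4 * C / (2 * real_of_int L + 1))" using Qk[OF that] by simp
    also have "\<dots> \<le> 64 * (4 * C / t)"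
      by (intro mult_left_mono divide_left_mono tle) (use tp L0 in \<open>simp_all add: C_def mult_pos_pos\<close>)
    also have "\<dots> = s^2" using s2 by simp
    finally have "(cmod (uu t k))^2 \<le> s^2" .
    then show ?thesis by (rule power2_le_imp_le) (use s0 in simp)
  qed
  have "1/4 \<le> (\<Sum>j\<in>?R. (cmod (uu t j))^2)" using mass[OF t] by (simp add: L_def)
  also have "\<dots> \<le> (\<Sum>j\<in>?R. s * cmod (uu t j))"
  proof (rule sum_mono)
    fix j assume j: "j \<in> ?R"
    have "cmod (uu t j) * cmod (uu t j) \<le> s * cmod (uu t j)"
      by (rule mult_right_mono[OF Uk[OF j]]) simp
    then show "(cmod (uu t j))^2 \<le> s * cmod (uu t j)" by (simp add: power2_eq_square)
  qed
  also have "\<dots> = s * (\<Sum>j\<in>?R. cmod (uu t j))" by (simp add: sum_distrib_left)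
  finally have "1/4 \<le> s * (\<Sum>j\<in>?R. cmod (uu t j))" .
  then have "1 / (4 * s) \<le> (\<Sum>j\<in>?R. cmod (uu t j))" using s0 by (simp add: field_simps)
  moreover have "1 / (4 * s) = sqrt t / (64 * exp 63)"
  proof -
    have "sqrt t > 0" using tp by simp
    then show ?thesis unfolding s_def by (simp add: field_simps)
  qed
  ultimately have "sqrt t / (64 * exp 63) \<le> (\<Sum>j\<in>?R. cmod (uu t j))" by (simp only:)
  then show ?thesis unfolding L_def .
qed

lemma d_facts: "(E::real) \<ge> 1 \<Longrightarrow> 1 / (64 * E) > 0 \<and> 1 / (64 * E) \<le> 1/64"
  by (simp add: field_simps)

theorem lemmaA:
  shows "\<exists>\<delta>::real. \<delta> > 0 \<and>
    (\<forall>t::real. t \<ge> 0 \<longrightarrow>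
      (\<exists>a :: int \<Rightarrow> complex. (\<forall>j. norm (a j) \<le> 1) \<and>
         norm (schr_evol t a 0) \<ge> \<delta> * sqrt t))"
proof -
  define d :: real where "d = 1 / (64 * exp 63)"
  have E1: "exp (63::real) \<ge> 1" by simp
  have d0: "d > 0" and d64: "d \<le> 1/64" using d_facts[OF E1] unfolding d_def by auto
  have main: "\<exists>a :: int \<Rightarrow> complex. (\<forall>j. norm (a j) \<le> 1) \<and> norm (schr_evol t a 0) \<ge> d * sqrt t"
    if t0: "t \<ge> 0" for t
  proof -
    have "\<exists>N. (\<Sum>j\<in>{-N..N}. cmod (uu t j)) \<ge> d * sqrt t"
    proof (cases "t < 2")
      case True
      have "sqrt t \<le> sqrt 4" unfolding real_sqrt_le_iff using True by simp
      then have st: "sqrt t \<le> 2" by (simp only: real_sqrt_four)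
      have "d * sqrt t \<le> 1/64 * 2" by (rule mult_mono[OF d64 st]) (simp_all add: t0)
      also have "\<dots> \<le> (\<Sum>j\<in>{-4..4::int}. cmod (uu t j))" using small_case[OF t0 True] by simp
      finally show ?thesis by blast
    next
      case False
      then have "t \<ge> 2" by simp
      from large_case[OF this] have "d * sqrt t \<le> (\<Sum>j\<in>{-LL t..LL t}. cmod (uu t j))"
        unfolding d_def by simp
      then show ?thesis by blast
    qed
    then obtain N where N: "(\<Sum>j\<in>{-N..N}. cmod (uu t j)) \<ge> d * sqrt t" by blast
    define a where "a = (\<lambda>j. if j \<in> {-N..N} then cnj (sgn (uu t (-j))) else 0)"
    have A: "(\<forall>j. norm (a j) \<le> 1) \<and> norm (schr_evol t a 0) = (\<Sum>j\<in>{-N..N}. cmod (uu t j))"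
      unfolding a_def by (rule assemble)
    show ?thesis
    proof (rule exI[of _ a], rule conjI)
      show "\<forall>j. norm (a j) \<le> 1" using A by blast
      show "norm (schr_evol t a 0) \<ge> d * sqrt t" using A N by simp
    qed
  qed
  show ?thesis using d0 main by blast
qed

end
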